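(* For all positive integers $d$ and $p$, (i) $\displaystyle \left|B(d,p)\cap\mathbb{P}^d_\circ\right|=\frac{1}{2}\sum_{j=1}^{d}2^j\binom{d}{j}\sum_{i=j}^{p}c_\psi(i,j)$, and (ii) $\displaystyle \kappa\!\left(B(d,p)\cap\mathbb{P}^d_\circ\right)=\frac{1}{2d}\sum_{j=1}^{d}2^j\binom{d}{j}\sum_{i=j}^{p}i\,c_\psi(i,j)$, where $c_\psi(i,j)$ is the number of primitive points of $\mathbb{Z}^j$ with all coordinates positive and $1$-norm $i$.
   Context: A point of $\mathbb{Z}^d$ is primitive if its coordinates are relatively prime; $\mathbb{P}^d_\circ$ denotes the set of primitive points of $\mathbb{Z}^d$ whose first non-zero coordinate is positive. $B(d,p)=\{x\in\mathbb{R}^d:\|x\|_1\le p\}$. For a finite $\mathcal{X}\subset\mathbb{R}^d$, $\kappa(\mathcal{X})=\max_{1\le i\le d}\sum_{x\in\mathcal{X}}|x_i|$. *)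

theory Defs
  imports "HOL-Analysis.Analysis"
begin

text \<open>Integer points of Z^d are represented as functions nat => int that vanish
  outside {..<d} (coordinates indexed 0..d-1).\<close>

definition lattice_pts :: "nat \<Rightarrow> (nat \<Rightarrow> int) set" where
  "lattice_pts d = {x. \<forall>i. i \<ge> d \<longrightarrow> x i = 0}"

definition primitive :: "nat \<Rightarrow> (nat \<Rightarrow> int) \<Rightarrow> bool" where
  "primitive d x \<longleftrightarrow> Gcd (x ` {..<d}) = 1"

definition first_nonzero_pos :: "nat \<Rightarrow> (nat \<Rightarrow> int) \<Rightarrow> bool" where
  "first_nonzero_pos d x \<longleftrightarrow> (\<exists>k<d. x k > 0 \<and> (\<forall>i<k. x i = 0))"

definition prim_circ :: "nat \<Rightarrow> (nat \<Rightarrow> int) set" where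
  "prim_circ d = {x \<in> lattice_pts d. primitive d x \<and> first_nonzero_pos d x}"

definition norm1 :: "nat \<Rightarrow> (nat \<Rightarrow> int) \<Rightarrow> int" where
  "norm1 d x = (\<Sum>i<d. \<bar>x i\<bar>)"

definition ball1 :: "nat \<Rightarrow> nat \<Rightarrow> (nat \<Rightarrow> int) set" where
  "ball1 d p = {x \<in> lattice_pts d. norm1 d x \<le> int p}"

definition kappa :: "nat \<Rightarrow> (nat \<Rightarrow> int) set \<Rightarrow> int" where
  "kappa d X = Max ((\<lambda>i. \<Sum>x\<in>X. \<bar>x i\<bar>) ` {..<d})"

definition c_psi :: "nat \<Rightarrow> nat \<Rightarrow> nat" where
  "c_psi i j = card {x \<in> lattice_pts j. primitive j x \<and> (\<forall>k<j. x k > 0) \<and> norm1 j x = int i}"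

end

theory Submission
  imports Defs
begin

lemma Gcd_int_eq_1_iff: "Gcd (X::int set) = 1 \<longleftrightarrow> (\<forall>m. (\<forall>z\<in>X. m dvd z) \<longrightarrow> is_unit m)"
proof
  assume "Gcd X = 1" then show "\<forall>m. (\<forall>z\<in>X. m dvd z) \<longrightarrow> is_unit m"
    by (metis dvd_Gcd_iff)
next
  assume h: "\<forall>m. (\<forall>z\<in>X. m dvd z) \<longrightarrow> is_unit m"
  have "\<forall>z\<in>X. Gcd X dvd z" by (simp add: Gcd_dvd)
  then have "is_unit (Gcd X)" using h by blast
  then have "\<bar>Gcd X\<bar> = 1" by simp
  moreover have "Gcd X \<ge> 0" by simp
  ultimately show "Gcd X = 1" by simp
qed

lemma primitive_iff: "primitive d x \<longleftrightarrow> (\<forall>m. (\<forall>k<d. m dvd x k) \<longrightarrow> is_unit m)"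
  unfolding primitive_def Gcd_int_eq_1_iff by auto

definition AA :: "nat \<Rightarrow> nat \<Rightarrow> (nat \<Rightarrow> int) set" where
  "AA d p = {x \<in> lattice_pts d. primitive d x \<and> norm1 d x \<le> int p}"

lemma finite_AA: "finite (AA d p)"
proof -
  have "AA d p \<subseteq> {f. \<forall>x. (x \<in> {..<d} \<longrightarrow> f x \<in> {-int p..int p}) \<and> (x \<notin> {..<d} \<longrightarrow> f x = 0)}"
  proof (intro subsetI CollectI allI conjI impI)
    fix x i assume x: "x \<in> AA d p" and i: "i \<in> {..<d}"
    have "\<bar>x i\<bar> \<le> norm1 d x" unfolding norm1_def
      using i by (intro member_le_sum) auto
    then show "x i \<in> {-int p..int p}" using x unfolding AA_def by auto
  next
    fix x i assume "x \<in> AA d p" "i \<notin> {..<d}"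
    then show "x i = 0" unfolding AA_def lattice_pts_def by auto
  qed
  then show ?thesis by (rule finite_subset) (intro finite_set_of_finite_funs; simp)
qed

lemma primitive_nonzero: assumes "primitive d x" shows "\<exists>k<d. x k \<noteq> 0"
proof (rule ccontr)
  assume "\<not> ?thesis"
  then have "\<forall>k<d. (2::int) dvd x k" by auto
  with assms show False unfolding primitive_iff by fastforce
qed

lemma primitive_uminus: "primitive d (-x) \<longleftrightarrow> primitive d x"
  unfolding primitive_iff by simp

lemma norm1_uminus: "norm1 d (-x) = norm1 d x"
  unfolding norm1_def by simp

lemma AA_uminus: "x \<in> AA d p \<Longrightarrow> -x \<in> AA d p"
  unfolding AA_def lattice_pts_def by (auto simp: primitive_uminus norm1_uminus)

lemma fnp_cases:
  assumes "\<exists>k<d. x k \<noteq> 0"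
  shows "first_nonzero_pos d x \<or> first_nonzero_pos d (-x)"
proof -
  define k where "k = (LEAST k. x k \<noteq> 0)"
  obtain k0 where k0: "k0 < d" "x k0 \<noteq> 0" using assms by auto
  have xk: "x k \<noteq> 0" unfolding k_def by (rule LeastI) (rule k0(2))
  have "k \<le> k0" unfolding k_def by (rule Least_le) (rule k0(2))
  then have kd: "k < d" using k0 by simp
  have "\<forall>i<k. x i = 0" unfolding k_def using not_less_Least by blast
  then show ?thesis unfolding first_nonzero_pos_def using xk kd
    by (cases "x k > 0") auto
qed

lemma fnp_not_both:
  assumes "first_nonzero_pos d x" "first_nonzero_pos d (-x)" shows False
proof -
  obtain k1 where k1: "k1 < d" "x k1 > 0" "\<forall>i<k1. x i = 0" using assms(1) unfolding first_nonzero_pos_def by auto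
  obtain k2 where k2: "k2 < d" "-x k2 > 0" "\<forall>i<k2. x i = 0" using assms(2) unfolding first_nonzero_pos_def by auto
  show False using k1 k2 by (cases k1 k2 rule: linorder_cases) auto
qed

definition PP where "PP d p = {x \<in> AA d p. first_nonzero_pos d x}"

lemma PP_eq: "ball1 d p \<inter> prim_circ d = PP d p"
  unfolding PP_def AA_def ball1_def prim_circ_def by auto

lemma AA_split: "AA d p = PP d p \<union> uminus ` PP d p" "PP d p \<inter> uminus ` PP d p = {}"
proof -
  show "AA d p = PP d p \<union> uminus ` PP d p"
  proof (intro equalityI subsetI)
    fix x assume x: "x \<in> AA d p"
    then have "\<exists>k<d. x k \<noteq> 0" using primitive_nonzero unfolding AA_def by blast
    then have "first_nonzero_pos d x \<or> first_nonzero_pos d (-x)" by (rule fnp_cases)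
    then show "x \<in> PP d p \<union> uminus ` PP d p"
    proof
      assume "first_nonzero_pos d (-x)"
      then have "-x \<in> PP d p" using AA_uminus[OF x] unfolding PP_def by auto
      then have "- (-x) \<in> uminus ` PP d p" by blast
      moreover have "- (-x) = x" by (simp add: fun_Compl_def)
      ultimately show ?thesis by simp
    qed (use x in \<open>auto simp: PP_def\<close>)
  qed (auto simp: PP_def AA_uminus)
  show "PP d p \<inter> uminus ` PP d p = {}"
    using fnp_not_both unfolding PP_def by fastforce
qed

lemma sum_AA_PP:
  fixes h :: "(nat \<Rightarrow> int) \<Rightarrow> real"
  assumes "\<And>x. h (-x) = h x"
  shows "(\<Sum>x\<in>AA d p. h x) = 2 * (\<Sum>x\<in>PP d p. h x)"
proof -
  have fin: "finite (PP d p)" using finite_AA unfolding PP_def by auto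
  have "(\<Sum>x\<in>AA d p. h x) = (\<Sum>x\<in>PP d p. h x) + (\<Sum>x\<in>uminus ` PP d p. h x)"
    using AA_split fin by (simp add: sum.union_disjoint)
  also have "(\<Sum>x\<in>uminus ` PP d p. h x) = (\<Sum>x\<in>PP d p. h (-x))"
    by (subst sum.reindex) (auto intro!: inj_onI simp: fun_Compl_def fun_eq_iff)
  also have "(\<Sum>x\<in>PP d p. h (-x)) = (\<Sum>x\<in>PP d p. h x)"
    by (rule sum.cong) (simp_all only: assms)
  finally show ?thesis by linarith
qed


definition QQ :: "nat \<Rightarrow> nat \<Rightarrow> (nat \<Rightarrow> int) set" where
  "QQ j p = {y \<in> lattice_pts j. primitive j y \<and> (\<forall>k<j. y k > 0) \<and> norm1 j y \<le> int p}"

definition AS :: "nat \<Rightarrow> nat \<Rightarrow> nat set \<Rightarrow> (nat \<Rightarrow> int) set" where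
  "AS d p S = {x \<in> AA d p. {k. k < d \<and> x k \<noteq> 0} = S}"

lemma norm_reindex:
  fixes x :: "nat \<Rightarrow> int"
  assumes f: "bij_betw f {..<j} S" and S: "S \<subseteq> {..<d}" and z: "\<And>n. n < d \<Longrightarrow> n \<notin> S \<Longrightarrow> x n = 0"
  shows "(\<Sum>n<d. \<bar>x n\<bar>) = (\<Sum>k<j. \<bar>x (f k)\<bar>)"
proof -
  have "(\<Sum>n<d. \<bar>x n\<bar>) = (\<Sum>n\<in>S. \<bar>x n\<bar>)"
    using S z by (intro sum.mono_neutral_right) auto
  also have "\<dots> = (\<Sum>k<j. \<bar>x (f k)\<bar>)"
    by (rule sum.reindex_bij_betw[OF f, symmetric])
  finally show ?thesis .
qed

lemma sum_AS:
  fixes G :: "int \<Rightarrow> real"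
  assumes S: "S \<subseteq> {..<d}"
  shows "(\<Sum>x\<in>AS d p S. G (norm1 d x)) = 2 ^ card S * (\<Sum>y\<in>QQ (card S) p. G (norm1 (card S) y))"
proof -
  define j where "j = card S"
  have finS: "finite S" using S finite_subset by blast
  obtain f where f0: "bij_betw f {0..<j} S" using ex_bij_betw_nat_finite[OF finS] unfolding j_def by blast
  have f: "bij_betw f {..<j} S" using f0 by (simp add: atLeast0LessThan)
  define g where "g = inv_into {..<j} f"
  have g: "bij_betw g S {..<j}" unfolding g_def by (rule bij_betw_inv_into[OF f])
  have gf: "\<And>k. k < j \<Longrightarrow> g (f k) = k" unfolding g_def using f by (simp add: bij_betw_def)
  have fg: "\<And>n. n \<in> S \<Longrightarrow> f (g n) = n" unfolding g_def using f by (simp add: bij_betw_def f_inv_into_f)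
  have fS: "\<And>k. k < j \<Longrightarrow> f k \<in> S" using f by (auto simp: bij_betw_def)
  have gS: "\<And>n. n \<in> S \<Longrightarrow> g n < j" using g by (auto simp: bij_betw_def)
  define SG where "SG = PiE S (\<lambda>_. {-1, 1::int})"
  define \<Phi> where "\<Phi> = (\<lambda>(\<sigma>::nat \<Rightarrow> int, y::nat \<Rightarrow> int). (\<lambda>n. if n \<in> S then \<sigma> n * y (g n) else 0))"
  define \<Psi> where "\<Psi> = (\<lambda>x::nat \<Rightarrow> int. (restrict (\<lambda>n. sgn (x n)) S, (\<lambda>k. if k < j then \<bar>x (f k)\<bar> else 0)))"
  have bij: "bij_betw \<Phi> (SG \<times> QQ j p) (AS d p S)"
  proof (rule bij_betw_byWitness[where f' = \<Psi>])
    show "\<forall>a\<in>SG \<times> QQ j p. \<Psi> (\<Phi> a) = a"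
    proof
      fix a assume a: "a \<in> SG \<times> QQ j p"
      obtain \<sigma> y where a_eq: "a = (\<sigma>, y)" by (cases a)
      have \<sigma>: "\<sigma> \<in> SG" and y: "y \<in> QQ j p" using a a_eq by auto
      have "restrict (\<lambda>n. sgn (\<Phi> (\<sigma>, y) n)) S = \<sigma>"
      proof
        fix n show "restrict (\<lambda>n. sgn (\<Phi> (\<sigma>, y) n)) S n = \<sigma> n"
        proof (cases "n \<in> S")
          case True
          then have "y (g n) > 0" using y gS unfolding QQ_def by auto
          moreover have "\<sigma> n \<in> {-1, 1}" using \<sigma> True unfolding SG_def by auto
          ultimately show ?thesis using True unfolding \<Phi>_def by (auto simp: sgn_mult)
        next
          case False then show ?thesis using \<sigma> unfolding SG_def by (auto simp: PiE_def extensional_def)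
        qed
      qed
      moreover have "(\<lambda>k. if k < j then \<bar>\<Phi> (\<sigma>, y) (f k)\<bar> else 0) = y"
      proof
        fix k show "(if k < j then \<bar>\<Phi> (\<sigma>, y) (f k)\<bar> else 0) = y k"
        proof (cases "k < j")
          case True
          then have "y k > 0" using y unfolding QQ_def by auto
          moreover have "\<sigma> (f k) \<in> {-1, 1}" using \<sigma> fS[OF True] unfolding SG_def by auto
          ultimately show ?thesis using True fS[OF True] gf[OF True] unfolding \<Phi>_def by (auto simp: abs_mult)
        next
          case False then show ?thesis using y unfolding QQ_def lattice_pts_def by auto
        qed
      qed
      ultimately show "\<Psi> (\<Phi> a) = a" unfolding a_eq \<Psi>_def by simp
    qed
    show "\<forall>x\<in>AS d p S. \<Phi> (\<Psi> x) = x"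
    proof
      fix x assume x: "x \<in> AS d p S"
      show "\<Phi> (\<Psi> x) = x"
      proof
        fix n show "\<Phi> (\<Psi> x) n = x n"
        proof (cases "n \<in> S")
          case True then show ?thesis unfolding \<Phi>_def \<Psi>_def using gS[OF True] fg[OF True]
            by (simp add: sgn_mult_abs)
        next
          case False
          have "x n = 0" using x False unfolding AS_def AA_def lattice_pts_def
            by (cases "n < d") auto
          then show ?thesis using False unfolding \<Phi>_def \<Psi>_def by simp
        qed
      qed
    qed
    show "\<Phi> ` (SG \<times> QQ j p) \<subseteq> AS d p S"
    proof clarify
      fix \<sigma> y assume \<sigma>: "\<sigma> \<in> SG" and y: "y \<in> QQ j p"
      define x where "x = \<Phi> (\<sigma>, y)"
      have xn: "\<And>n. x n = (if n \<in> S then \<sigma> n * y (g n) else 0)" unfolding x_def \<Phi>_def by simp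
      have \<sigma>S: "\<And>n. n \<in> S \<Longrightarrow> \<sigma> n \<in> {-1,1}" using \<sigma> unfolding SG_def by auto
      have ypos: "\<And>k. k < j \<Longrightarrow> y k > 0" using y unfolding QQ_def by auto
      have lat: "x \<in> lattice_pts d" using S unfolding lattice_pts_def by (auto simp: xn)
      have supp: "{k. k < d \<and> x k \<noteq> 0} = S"
      proof -
        have "\<And>n. n \<in> S \<Longrightarrow> x n \<noteq> 0" using \<sigma>S ypos gS xn by fastforce
        then show ?thesis using S xn by auto
      qed
      have nrm: "norm1 d x = norm1 j y"
      proof -
        have "norm1 d x = (\<Sum>k<j. \<bar>x (f k)\<bar>)" unfolding norm1_def
          by (rule norm_reindex[OF f S]) (simp add: xn)
        also have "\<dots> = (\<Sum>k<j. \<bar>y k\<bar>)"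
        proof (rule sum.cong)
          fix k assume "k \<in> {..<j}"
          then have k: "k < j" by simp
          show "\<bar>x (f k)\<bar> = \<bar>y k\<bar>" using \<sigma>S[OF fS[OF k]] fS[OF k] gf[OF k] xn
            by (auto simp: abs_mult)
        qed simp
        finally show ?thesis unfolding norm1_def .
      qed
      have prim: "primitive d x"
        unfolding primitive_iff
      proof (intro allI impI)
        fix m assume m: "\<forall>k<d. m dvd x k"
        have "\<forall>k<j. m dvd y k"
        proof (intro allI impI)
          fix k assume k: "k < j"
          have "m dvd x (f k)" using m fS[OF k] S by auto
          then have "m dvd \<sigma> (f k) * y k" using xn fS[OF k] gf[OF k] by simp
          then show "m dvd y k" using \<sigma>S[OF fS[OF k]] by auto
        qed
        then show "is_unit m" using y unfolding QQ_def primitive_iff by blast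
      qed
      show "\<Phi> (\<sigma>, y) \<in> AS d p S"
        unfolding x_def[symmetric] AS_def AA_def using lat supp nrm prim y unfolding QQ_def by auto
    qed
    show "\<Psi> ` AS d p S \<subseteq> SG \<times> QQ j p"
    proof (rule image_subsetI)
      fix x assume x: "x \<in> AS d p S"
      have lat: "x \<in> lattice_pts d" and prx: "primitive d x" and nx: "norm1 d x \<le> int p"
        and supp: "{k. k < d \<and> x k \<noteq> 0} = S" using x unfolding AS_def AA_def by auto
      have z: "\<And>n. n < d \<Longrightarrow> n \<notin> S \<Longrightarrow> x n = 0" using supp by auto
      have nzS: "\<And>n. n \<in> S \<Longrightarrow> x n \<noteq> 0" using supp by auto
      define y where "y = (\<lambda>k. if k < j then \<bar>x (f k)\<bar> else 0)"
      have "restrict (\<lambda>n. sgn (x n)) S \<in> SG" unfolding SG_def using nzS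
        by (auto simp: sgn_if)
      moreover have "y \<in> QQ j p"
      proof -
        have "y \<in> lattice_pts j" unfolding y_def lattice_pts_def by auto
        moreover have "\<forall>k<j. y k > 0" unfolding y_def using nzS fS by auto
        moreover have "norm1 j y = norm1 d x" unfolding norm1_def
          using norm_reindex[OF f S z] by (simp add: y_def)
        moreover have "primitive j y" unfolding primitive_iff
        proof (intro allI impI)
          fix m assume m: "\<forall>k<j. m dvd y k"
          have "\<forall>n<d. m dvd x n"
          proof (intro allI impI)
            fix n assume n: "n < d"
            show "m dvd x n"
            proof (cases "n \<in> S")
              case True
              have "m dvd y (g n)" using m gS[OF True] by auto
              then have "m dvd \<bar>x n\<bar>" unfolding y_def using gS[OF True] fg[OF True] by simp
              then show ?thesis by simp
            next
              case False then show ?thesis using z n by simp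
            qed
          qed
          then show "is_unit m" using prx unfolding primitive_iff by blast
        qed
        ultimately show ?thesis unfolding QQ_def using nx by auto
      qed
      ultimately show "\<Psi> x \<in> SG \<times> QQ j p" unfolding \<Psi>_def y_def by simp
    qed
  qed
  have nrmPhi: "\<And>a. a \<in> SG \<times> QQ j p \<Longrightarrow> norm1 d (\<Phi> a) = norm1 j (snd a)"
  proof -
    fix a assume a: "a \<in> SG \<times> QQ j p"
    obtain \<sigma> y where a_eq: "a = (\<sigma>, y)" by (cases a)
    have \<sigma>S: "\<And>n. n \<in> S \<Longrightarrow> \<sigma> n \<in> {-1,1}" using a a_eq unfolding SG_def by auto
    have xn: "\<And>n. \<Phi> a n = (if n \<in> S then \<sigma> n * y (g n) else 0)" unfolding a_eq \<Phi>_def by simp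
    have "norm1 d (\<Phi> a) = (\<Sum>k<j. \<bar>\<Phi> a (f k)\<bar>)" unfolding norm1_def
      by (rule norm_reindex[OF f S]) (simp add: xn)
    also have "\<dots> = (\<Sum>k<j. \<bar>y k\<bar>)"
    proof (rule sum.cong)
      fix k assume "k \<in> {..<j}"
      then have k: "k < j" by simp
      show "\<bar>\<Phi> a (f k)\<bar> = \<bar>y k\<bar>" using \<sigma>S[OF fS[OF k]] fS[OF k] gf[OF k] xn
        by (auto simp: abs_mult)
    qed simp
    finally show "norm1 d (\<Phi> a) = norm1 j (snd a)" unfolding norm1_def a_eq by simp
  qed
  have "(\<Sum>x\<in>AS d p S. G (norm1 d x)) = (\<Sum>a\<in>SG \<times> QQ j p. G (norm1 d (\<Phi> a)))"
    by (rule sum.reindex_bij_betw[OF bij, symmetric])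
  also have "\<dots> = (\<Sum>a\<in>SG \<times> QQ j p. G (norm1 j (snd a)))"
    by (rule sum.cong) (simp_all add: nrmPhi)
  also have "\<dots> = (\<Sum>(\<sigma>, y)\<in>SG \<times> QQ j p. G (norm1 j y))"
    by (simp add: case_prod_beta)
  also have "\<dots> = (\<Sum>\<sigma>\<in>SG. \<Sum>y\<in>QQ j p. G (norm1 j y))"
    by (rule sum.cartesian_product[symmetric])
  also have "\<dots> = real (card SG) * (\<Sum>y\<in>QQ j p. G (norm1 j y))" by simp
  also have "card SG = 2 ^ j" unfolding SG_def using finS by (simp add: card_PiE j_def numeral_2_eq_2)
  finally show ?thesis unfolding j_def by simp
qed


lemma finite_QQ: "finite (QQ j p)"
  by (rule finite_subset[OF _ finite_AA[of j p]]) (auto simp: QQ_def AA_def)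

lemma norm1_ge: assumes "\<forall>k<j. y k > 0" shows "norm1 j y \<ge> int j"
proof -
  have "(\<Sum>k<j. (1::int)) \<le> (\<Sum>k<j. \<bar>y k\<bar>)"
    using assms by (intro sum_mono) auto
  then show ?thesis unfolding norm1_def by simp
qed

lemma norm1_nonneg: "norm1 j y \<ge> 0" unfolding norm1_def by (simp add: sum_nonneg)

lemma sum_QQ:
  fixes G :: "int \<Rightarrow> real"
  shows "(\<Sum>y\<in>QQ j p. G (norm1 j y)) = (\<Sum>i=j..p. G (int i) * real (c_psi i j))"
proof -
  have img: "(\<lambda>y. nat (norm1 j y)) ` QQ j p \<subseteq> {j..p}"
  proof (rule image_subsetI)
    fix y assume y: "y \<in> QQ j p"
    then have "int j \<le> norm1 j y" "norm1 j y \<le> int p" using norm1_ge unfolding QQ_def by auto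
    then show "nat (norm1 j y) \<in> {j..p}" by auto
  qed
  have "(\<Sum>y\<in>QQ j p. G (norm1 j y)) = (\<Sum>i\<in>{j..p}. \<Sum>y\<in>{y \<in> QQ j p. nat (norm1 j y) = i}. G (norm1 j y))"
    by (rule sum.group[OF finite_QQ _ img, symmetric]) simp
  also have "\<dots> = (\<Sum>i=j..p. G (int i) * real (c_psi i j))"
  proof (rule sum.cong)
    fix i assume i: "i \<in> {j..p}"
    have eq: "{y \<in> QQ j p. nat (norm1 j y) = i} = {x \<in> lattice_pts j. primitive j x \<and> (\<forall>k<j. x k > 0) \<and> norm1 j x = int i}"
      using i norm1_nonneg[of j] unfolding QQ_def by force
    have "(\<Sum>y\<in>{y \<in> QQ j p. nat (norm1 j y) = i}. G (norm1 j y)) = (\<Sum>y\<in>{y \<in> QQ j p. nat (norm1 j y) = i}. G (int i))"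
      using norm1_nonneg[of j] by (intro sum.cong) auto
    also have "\<dots> = G (int i) * real (c_psi i j)" unfolding c_psi_def eq[symmetric] by simp
    finally show "(\<Sum>y\<in>{y \<in> QQ j p. nat (norm1 j y) = i}. G (norm1 j y)) = G (int i) * real (c_psi i j)" .
  qed simp
  finally show ?thesis .
qed

lemma sum_AA:
  fixes G :: "int \<Rightarrow> real"
  shows "(\<Sum>x\<in>AA d p. G (norm1 d x)) = (\<Sum>j=1..d. 2^j * real (d choose j) * (\<Sum>i=j..p. G (int i) * real (c_psi i j)))"
proof -
  define T where "T = Pow {..<d} - {{}}"
  define F where "F = (\<lambda>j. \<Sum>y\<in>QQ j p. G (norm1 j y))"
  have finT: "finite T" unfolding T_def by simp
  have img: "(\<lambda>x. {k. k < d \<and> x k \<noteq> 0}) ` AA d p \<subseteq> T"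
    unfolding T_def AA_def using primitive_nonzero by fastforce
  have "(\<Sum>x\<in>AA d p. G (norm1 d x)) = (\<Sum>S\<in>T. \<Sum>x\<in>{x \<in> AA d p. {k. k < d \<and> x k \<noteq> 0} = S}. G (norm1 d x))"
    by (rule sum.group[OF finite_AA finT img, symmetric])
  also have "\<dots> = (\<Sum>S\<in>T. 2 ^ card S * F (card S))"
  proof (rule sum.cong)
    fix S assume "S \<in> T"
    then have "S \<subseteq> {..<d}" unfolding T_def by auto
    then show "(\<Sum>x\<in>{x \<in> AA d p. {k. k < d \<and> x k \<noteq> 0} = S}. G (norm1 d x)) = 2 ^ card S * F (card S)"
      using sum_AS[where G=G and p=p] unfolding AS_def F_def by simp
  qed simp
  also have "\<dots> = (\<Sum>j\<in>{1..d}. \<Sum>S\<in>{S \<in> T. card S = j}. 2 ^ card S * F (card S))"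
  proof (rule sum.group[OF finT _, symmetric])
    show "card ` T \<subseteq> {1..d}"
    proof
      fix j assume "j \<in> card ` T"
      then obtain S where S: "S \<subseteq> {..<d}" "S \<noteq> {}" "j = card S" unfolding T_def by auto
      have "finite S" using S(1) finite_subset by blast
      then have "card S \<ge> 1" using S(2) by (simp add: Suc_le_eq card_gt_0_iff)
      moreover have "card S \<le> d" using card_mono[OF _ S(1)] by simp
      ultimately show "j \<in> {1..d}" using S(3) by simp
    qed
  qed simp
  also have "\<dots> = (\<Sum>j=1..d. 2^j * real (d choose j) * F j)"
  proof (rule sum.cong)
    fix j assume j: "j \<in> {1..d}"
    have eq: "{S \<in> T. card S = j} = {B. B \<subseteq> {..<d} \<and> card B = j}"
      using j unfolding T_def by auto
    have "(\<Sum>S\<in>{S \<in> T. card S = j}. 2 ^ card S * F (card S)) = (\<Sum>S\<in>{S \<in> T. card S = j}. 2 ^ j * F j)"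
      by (rule sum.cong) auto
    also have "\<dots> = real (d choose j) * (2 ^ j * F j)" unfolding eq by (simp add: n_subsets)
    finally show "(\<Sum>S\<in>{S \<in> T. card S = j}. 2 ^ card S * F (card S)) = 2^j * real (d choose j) * F j"
      by simp
  qed simp
  finally show ?thesis unfolding F_def sum_QQ .
qed


definition tr :: "nat \<Rightarrow> nat \<Rightarrow> nat" where
  "tr k n = (if n = k then 0 else if n = 0 then k else n)"

lemma tr_tr: "tr k (tr k n) = n" unfolding tr_def by auto

lemma tr_lt: "k < d \<Longrightarrow> n < d \<Longrightarrow> tr k n < d" unfolding tr_def by auto

lemma tr_bij: assumes "k < d" shows "bij_betw (tr k) {..<d} {..<d}"
  by (rule bij_betw_byWitness[where f' = "tr k"]) (auto simp: tr_tr tr_lt[OF assms])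

lemma AA_tr: assumes "k < d" "x \<in> AA d p" shows "x \<circ> tr k \<in> AA d p"
proof -
  have lat: "x \<in> lattice_pts d" "primitive d x" "norm1 d x \<le> int p" using assms(2) unfolding AA_def by auto
  have "x \<circ> tr k \<in> lattice_pts d" using lat(1) assms(1) unfolding lattice_pts_def tr_def by auto
  moreover have "norm1 d (x \<circ> tr k) = norm1 d x" unfolding norm1_def
    using sum.reindex_bij_betw[OF tr_bij[OF assms(1)], of "\<lambda>n. \<bar>x n\<bar>"] by simp
  moreover have "primitive d (x \<circ> tr k)" unfolding primitive_iff
  proof (intro allI impI)
    fix m assume m: "\<forall>i<d. m dvd (x \<circ> tr k) i"
    have "\<forall>i<d. m dvd x i"
    proof (intro allI impI)
      fix i assume "i < d"
      then have "tr k i < d" using tr_bij[OF assms(1)] by (auto simp: bij_betw_def)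
      then have "m dvd x (tr k (tr k i))" using m by auto
      then show "m dvd x i" by (simp add: tr_tr)
    qed
    then show "is_unit m" using lat(2) unfolding primitive_iff by blast
  qed
  ultimately show ?thesis using lat unfolding AA_def by auto
qed

lemma sum_coord_eq:
  assumes "k < d"
  shows "(\<Sum>x\<in>AA d p. \<bar>x k\<bar>) = (\<Sum>x\<in>AA d p. \<bar>x 0\<bar>)"
proof -
  have bij: "bij_betw (\<lambda>x. x \<circ> tr k) (AA d p) (AA d p)"
  proof (rule bij_betw_byWitness[where f' = "\<lambda>x. x \<circ> tr k"])
    show "\<forall>a\<in>AA d p. a \<circ> tr k \<circ> tr k = a" by (simp add: fun_eq_iff tr_tr)
    then show "\<forall>a\<in>AA d p. a \<circ> tr k \<circ> tr k = a" .
    show "(\<lambda>x. x \<circ> tr k) ` AA d p \<subseteq> AA d p" using AA_tr[OF assms] by blast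
    then show "(\<lambda>x. x \<circ> tr k) ` AA d p \<subseteq> AA d p" .
  qed
  have "(\<Sum>x\<in>AA d p. \<bar>(x \<circ> tr k) 0\<bar>) = (\<Sum>x\<in>AA d p. \<bar>x 0\<bar>)"
    by (rule sum.reindex_bij_betw[OF bij])
  moreover have "tr k 0 = k" unfolding tr_def by auto
  ultimately show ?thesis by simp
qed

theorem proposition2p3:
  fixes d p :: nat
  assumes "d \<ge> 1" and "p \<ge> 1"
  shows "(real (card (ball1 d p \<inter> prim_circ d)) =
           (1/2) * (\<Sum>j=1..d. 2^j * real (d choose j) * (\<Sum>i=j..p. real (c_psi i j)))) \<and>
         (real_of_int (kappa d (ball1 d p \<inter> prim_circ d)) =
           (1 / (2 * real d)) * (\<Sum>j=1..d. 2^j * real (d choose j) * (\<Sum>i=j..p. real i * real (c_psi i j))))"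
proof
  have c1: "(\<Sum>x\<in>AA d p. (1::real)) = 2 * (\<Sum>x\<in>PP d p. 1)" by (rule sum_AA_PP) simp
  have c2: "(\<Sum>x\<in>AA d p. (\<lambda>_. 1::real) (norm1 d x)) = (\<Sum>j=1..d. 2^j * real (d choose j) * (\<Sum>i=j..p. (\<lambda>_. 1::real) (int i) * real (c_psi i j)))"
    by (rule sum_AA)
  show "real (card (ball1 d p \<inter> prim_circ d)) =
           (1/2) * (\<Sum>j=1..d. 2^j * real (d choose j) * (\<Sum>i=j..p. real (c_psi i j)))"
    using c1 c2 unfolding PP_eq by simp
next
  define c where "c = (\<Sum>x\<in>PP d p. \<bar>x 0\<bar>)"
  have coord: "real_of_int (\<Sum>x\<in>PP d p. \<bar>x k\<bar>) = real_of_int c" if k: "k < d" for k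
  proof -
    have "real_of_int (\<Sum>x\<in>PP d p. \<bar>x k\<bar>) = (1/2) * (\<Sum>x\<in>AA d p. real_of_int \<bar>x k\<bar>)"
      using sum_AA_PP[of "\<lambda>x. real_of_int \<bar>x k\<bar>" d p] by (simp add: fun_Compl_def)
    also have "\<dots> = (1/2) * real_of_int (\<Sum>x\<in>AA d p. \<bar>x 0\<bar>)"
      using sum_coord_eq[OF k, of p] by (metis of_int_sum)
    also have "\<dots> = real_of_int c"
      using sum_AA_PP[of "\<lambda>x. real_of_int \<bar>x 0\<bar>" d p] unfolding c_def by (simp add: fun_Compl_def)
    finally show ?thesis .
  qed
  have img: "(\<lambda>i. \<Sum>x\<in>PP d p. \<bar>x i\<bar>) ` {..<d} = {c}"
  proof -
    have "\<And>k. k < d \<Longrightarrow> (\<Sum>x\<in>PP d p. \<bar>x k\<bar>) = c" using coord by (metis of_int_eq_iff)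
    then have "(\<lambda>i. \<Sum>x\<in>PP d p. \<bar>x i\<bar>) ` {..<d} = (\<lambda>i. c) ` {..<d}"
      by (intro image_cong) auto
    moreover have "0 \<in> {..<d}" using assms(1) by simp
    then have "(\<lambda>i. c) ` {..<d} = {c}" by blast
    ultimately show ?thesis by simp
  qed
  have kap: "kappa d (ball1 d p \<inter> prim_circ d) = c" unfolding PP_eq kappa_def img by simp
  have "(\<Sum>k<d. real_of_int (\<Sum>x\<in>AA d p. \<bar>x k\<bar>)) = (\<Sum>k<d. real_of_int (\<Sum>x\<in>AA d p. \<bar>x 0\<bar>))"
    by (intro sum.cong refl) (metis lessThan_iff sum_coord_eq)
  then have "real d * real_of_int (\<Sum>x\<in>AA d p. \<bar>x 0\<bar>) = (\<Sum>k<d. real_of_int (\<Sum>x\<in>AA d p. \<bar>x k\<bar>))"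
    by simp
  also have "\<dots> = (\<Sum>x\<in>AA d p. real_of_int (norm1 d x))"
    unfolding norm1_def of_int_sum by (rule sum.swap)
  also have "\<dots> = (\<Sum>j=1..d. 2^j * real (d choose j) * (\<Sum>i=j..p. real_of_int (int i) * real (c_psi i j)))"
    by (rule sum_AA)
  finally have e: "real d * real_of_int (\<Sum>x\<in>AA d p. \<bar>x 0\<bar>) = (\<Sum>j=1..d. 2^j * real (d choose j) * (\<Sum>i=j..p. real i * real (c_psi i j)))"
    by simp
  have e2: "real_of_int (\<Sum>x\<in>AA d p. \<bar>x 0\<bar>) = 2 * real_of_int c"
    using sum_AA_PP[of "\<lambda>x. real_of_int \<bar>x 0\<bar>" d p] unfolding c_def by (simp add: fun_Compl_def)
  have dpos: "real d > 0" using assms(1) by simp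
  show "real_of_int (kappa d (ball1 d p \<inter> prim_circ d)) =
           (1 / (2 * real d)) * (\<Sum>j=1..d. 2^j * real (d choose j) * (\<Sum>i=j..p. real i * real (c_psi i j)))"
    unfolding kap e[symmetric] e2 using dpos by (simp add: field_simps)
qed

end
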